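(* There exists a $\mathbb{Q}$-linear map $\phi:\mathbb{Y}\to\mathbb{Q}[t]$ such that $\phi(Y_P)=t^{\mathrm{sink}(P)}$ for every signed poset $P$, where $\mathrm{sink}(P)$ is the number of sinks of $P$.
   Context: A signed graph $\Sigma$ is a finite graph (loops and multiple edges allowed) with $\mathrm{sgn}:E(\Sigma)\to\{+,-\}$; write $e:uv$ if $e$ has endpoints $u,v$. A coloring $\kappa:V(\Sigma)\to\mathbb{Z}$ is proper if $\kappa(u)\ne\mathrm{sgn}(e)\kappa(v)$ for every edge $e:uv$. An orientation assigns to each half-edge (incidence of an edge with an endpoint; a loop has two) an arrow toward or away from the vertex, such that on a positive edge exactly one of the two arrows points toward its vertex and on a negative edge both point toward or both point away. A cycle is a closed walk in which, considering only the edges of the walk, every vertex of the walk has at least one arrow pointing into it and one pointing out of it; an orientation is acyclic if it has no cycle; a sink is a vertex all of whose incident arrows point toward it (an isolated vertex is a sink). A signed poset is an acyclic orientation $P$ of a signed graph. A proper coloring $\kappa$ preserves $P$ if for every edge $e$ and each endpoint $v$ of $e$, with $u$ the other endpoint ($u=v$ for a loop), the arrow of $P$ at the incidence of $e$ with $v$ points toward $v$ iff $\kappa(v)>\mathrm{sgn}(e)\kappa(u)$. Let $Y_P=\sum_{\kappa}\prod_{v}x_{\kappa(v)}$ over proper colorings $\kappa$ preserving $P$ (variables $x_i$, $i\in\mathbb{Z}$), and let $\mathbb{Y}$ be the $\mathbb{Q}$-span of all $Y_P$, over all signed posets $P$ of all signed graphs. *)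

theory Defs
  imports "HOL-Library.Multiset" "HOL-Library.FuncSet" "HOL-Computational_Algebra.Polynomial"
begin

text \<open>Each edge e has an ordered pair of endpoints ends e = (u,v) (a loop has u = v),
  so it has two half-edges: (e, True) at u and (e, False) at v.
  sgn e = True means the edge is positive.\<close>

record sgraph =
  verts :: "nat set"
  edges :: "nat set"
  ends  :: "nat \<Rightarrow> nat \<times> nat"
  sgn   :: "nat \<Rightarrow> bool"

definition signed_graph :: "sgraph \<Rightarrow> bool" where
  "signed_graph G \<longleftrightarrow> finite (verts G) \<and> finite (edges G) \<and>
     (\<forall>e\<in>edges G. fst (ends G e) \<in> verts G \<and> snd (ends G e) \<in> verts G)"

definition endpt :: "sgraph \<Rightarrow> nat \<Rightarrow> bool \<Rightarrow> nat" where
  "endpt G e b = (if b then fst (ends G e) else snd (ends G e))"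

definition sgnval :: "sgraph \<Rightarrow> nat \<Rightarrow> int" where
  "sgnval G e = (if sgn G e then 1 else -1)"

text \<open>An orientation: arr e b = True iff the arrow at half-edge (e,b) points toward its vertex.\<close>
definition orientation :: "sgraph \<Rightarrow> (nat \<Rightarrow> bool \<Rightarrow> bool) \<Rightarrow> bool" where
  "orientation G arr \<longleftrightarrow> (\<forall>e\<in>edges G. sgn G e \<longleftrightarrow> arr e True \<noteq> arr e False)"

definition is_cycle :: "sgraph \<Rightarrow> (nat \<Rightarrow> bool \<Rightarrow> bool) \<Rightarrow> nat list \<Rightarrow> nat list \<Rightarrow> bool" where
  "is_cycle G arr vs es \<longleftrightarrow>
     length es \<ge> 1 \<and> length vs = length es + 1 \<and> vs ! 0 = vs ! length es \<and>
     (\<forall>i < length es. es ! i \<in> edges G \<and>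
        (ends G (es ! i) = (vs ! i, vs ! Suc i) \<or> ends G (es ! i) = (vs ! Suc i, vs ! i))) \<and>
     (\<forall>w \<in> set vs.
        (\<exists>e\<in>set es. \<exists>b. endpt G e b = w \<and> arr e b) \<and>
        (\<exists>e\<in>set es. \<exists>b. endpt G e b = w \<and> \<not> arr e b))"

definition acyclic_orientation :: "sgraph \<Rightarrow> (nat \<Rightarrow> bool \<Rightarrow> bool) \<Rightarrow> bool" where
  "acyclic_orientation G arr \<longleftrightarrow> orientation G arr \<and> \<not> (\<exists>vs es. is_cycle G arr vs es)"

definition signed_poset :: "sgraph \<Rightarrow> (nat \<Rightarrow> bool \<Rightarrow> bool) \<Rightarrow> bool" where
  "signed_poset G arr \<longleftrightarrow> signed_graph G \<and> acyclic_orientation G arr"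

definition is_sink :: "sgraph \<Rightarrow> (nat \<Rightarrow> bool \<Rightarrow> bool) \<Rightarrow> nat \<Rightarrow> bool" where
  "is_sink G arr v \<longleftrightarrow> v \<in> verts G \<and> (\<forall>e\<in>edges G. \<forall>b. endpt G e b = v \<longrightarrow> arr e b)"

definition sinks :: "sgraph \<Rightarrow> (nat \<Rightarrow> bool \<Rightarrow> bool) \<Rightarrow> nat" where
  "sinks G arr = card {v. is_sink G arr v}"

definition proper :: "sgraph \<Rightarrow> (nat \<Rightarrow> int) \<Rightarrow> bool" where
  "proper G \<kappa> \<longleftrightarrow> (\<forall>e\<in>edges G. \<kappa> (fst (ends G e)) \<noteq> sgnval G e * \<kappa> (snd (ends G e)))"

definition preserves :: "sgraph \<Rightarrow> (nat \<Rightarrow> bool \<Rightarrow> bool) \<Rightarrow> (nat \<Rightarrow> int) \<Rightarrow> bool" where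
  "preserves G arr \<kappa> \<longleftrightarrow>
     (\<forall>e\<in>edges G. \<forall>b. arr e b \<longleftrightarrow> \<kappa> (endpt G e b) > sgnval G e * \<kappa> (endpt G e (\<not> b)))"

text \<open>Y_P as a formal power series in the variables x_i (i \<in> int): the coefficient of the
  monomial \<Prod>_{i} x_i^{m(i)} (encoded by the multiset m of colours) is the number of
  proper colourings preserving P whose colour multiset is m.\<close>
definition Ycoef :: "sgraph \<Rightarrow> (nat \<Rightarrow> bool \<Rightarrow> bool) \<Rightarrow> int multiset \<Rightarrow> rat" where
  "Ycoef G arr m = of_nat (card {\<kappa> \<in> verts G \<rightarrow>\<^sub>E (UNIV :: int set).
       proper G \<kappa> \<and> preserves G arr \<kappa> \<and> image_mset \<kappa> (mset_set (verts G)) = m})"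

definition Yspan :: "(int multiset \<Rightarrow> rat) set" where
  "Yspan = {(\<lambda>m. \<Sum>p\<in>S. c p * Ycoef (fst p) (snd p) m) | S c.
              finite S \<and> (\<forall>p\<in>S. signed_poset (fst p) (snd p))}"

end

theory Submission
  imports Defs
begin

lemma sum_pow_card:
  fixes x :: "'c::comm_ring_1"
  assumes "finite Z"
  shows "(\<Sum>B\<in>Pow Z. x ^ card B) = (x + 1) ^ card Z"
proof -
  have "(\<Prod>z\<in>Z. x + 1) = (\<Sum>X\<in>Pow Z. (\<Prod>z\<in>X. x) * (\<Prod>z\<in>Z-X. 1))"
    by (rule prod_add[OF assms])
  then show ?thesis by simp
qed

lemma sum_neg_pow_card:
  assumes "finite Z"
  shows "(\<Sum>B\<in>Pow Z. (-1::int) ^ card B) = (if Z = {} then 1 else 0)"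
  using sum_pow_card[OF assms, of "-1::int"] assms by (auto simp: card_eq_0_iff)

definition PL :: "nat set \<Rightarrow> nat set \<Rightarrow> int" where
  "PL X Y = (\<Sum>p\<in>Sigma (Pow X) (\<lambda>A. Pow (Y - A)). (-1) ^ (card (fst p) + card (snd p)))"

lemma PL_alt:
  assumes "finite X" "finite Y"
  shows "PL X Y = (\<Sum>A\<in>Pow X. (-1) ^ card A * (if Y \<subseteq> A then 1 else 0))"
proof -
  have "PL X Y = (\<Sum>A\<in>Pow X. \<Sum>B\<in>Pow (Y - A). (-1) ^ (card A + card B))"
    unfolding PL_def using assms by (subst sum.Sigma) (auto simp: split_def)
  also have "\<dots> = (\<Sum>A\<in>Pow X. (-1) ^ card A * (\<Sum>B\<in>Pow (Y - A). (-1) ^ card B))"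
    by (simp add: power_add sum_distrib_left)
  also have "\<dots> = (\<Sum>A\<in>Pow X. (-1) ^ card A * (if Y \<subseteq> A then 1 else 0))"
    using assms by (intro sum.cong refl) (simp add: sum_neg_pow_card)
  finally show ?thesis .
qed

lemma PL_swap: "PL X Y = PL Y X"
proof -
  have "bij_betw (\<lambda>(a,b). (b,a)) (Sigma (Pow X) (\<lambda>A. Pow (Y - A))) (Sigma (Pow Y) (\<lambda>A. Pow (X - A)))"
    by (rule bij_betwI[where g="\<lambda>(a,b). (b,a)"]) auto
  from sum.reindex_bij_betw[OF this, of "\<lambda>p. (-1::int) ^ (card (fst p) + card (snd p))"]
  show ?thesis unfolding PL_def by (simp add: split_def add.commute)
qed

lemma PL_zero:
  assumes "finite X" "finite Y" "\<not> Y \<subseteq> X"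
  shows "PL X Y = 0"
  using assms by (subst PL_alt) (auto intro!: sum.neutral, blast)

lemma PL_same:
  assumes "finite X"
  shows "PL X X = (-1) ^ card X"
proof -
  have "PL X X = (\<Sum>A\<in>Pow X. (-1) ^ card A * (if X \<subseteq> A then 1 else 0))"
    by (rule PL_alt[OF assms assms])
  also have "\<dots> = (\<Sum>A\<in>{X}. (-1) ^ card A * (if X \<subseteq> A then 1 else 0))"
    using assms by (intro sum.mono_neutral_right) auto
  finally show ?thesis by simp
qed

fun wk :: "sgraph \<Rightarrow> nat list \<Rightarrow> nat list \<Rightarrow> bool" where
  "wk G [v] [] = True"
| "wk G (v # w # vs) (e # es) = (e \<in> edges G \<and> (ends G e = (v,w) \<or> ends G e = (w,v)) \<and> wk G (w # vs) es)"
| "wk G _ _ = False"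

lemma wk_Cons: "wk G (v # ys) (e # es) \<longleftrightarrow> ys \<noteq> [] \<and> e \<in> edges G \<and>
   (ends G e = (v, hd ys) \<or> ends G e = (hd ys, v)) \<and> wk G ys es"
  by (cases ys) auto

lemma wk_len: "wk G vs es \<Longrightarrow> length vs = length es + 1"
  by (induction G vs es rule: wk.induct) auto

lemma wk_nth: "wk G vs es \<Longrightarrow> i < length es \<Longrightarrow> es ! i \<in> edges G \<and>
   (ends G (es ! i) = (vs ! i, vs ! Suc i) \<or> ends G (es ! i) = (vs ! Suc i, vs ! i))"
proof (induction G vs es arbitrary: i rule: wk.induct)
  case (2 G v w vs e es)
  then show ?case by (cases i) auto
qed auto

lemma wk_splice:
  assumes "wk G (vs1 @ w # vs2) (es1 @ es2)" "length es1 = length vs1"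
    "e \<in> edges G" "ends G e = (w,x) \<or> ends G e = (x,w)"
  shows "wk G (vs1 @ w # x # w # vs2) (es1 @ e # e # es2)"
  using assms
proof (induction vs1 arbitrary: es1)
  case Nil
  then show ?case by (auto simp: wk_Cons)
next
  case (Cons v vs1)
  then obtain e1 es1' where es1: "es1 = e1 # es1'" by (cases es1) auto
  with Cons show ?case
    by (cases vs1) (auto simp: wk_Cons)
qed

lemma endpt_simps: "endpt G e True = fst (ends G e)" "endpt G e False = snd (ends G e)"
  by (auto simp: endpt_def)

lemma wk_incident: "wk G vs es \<Longrightarrow> es \<noteq> [] \<Longrightarrow> w \<in> set vs \<Longrightarrow> \<exists>e\<in>set es. \<exists>b. endpt G e b = w"
proof (induction G vs es rule: wk.induct)
  case (2 G v u vs e es)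
  have ee: "endpt G e True = fst (ends G e)" "endpt G e False = snd (ends G e)"
    by (auto simp: endpt_def)
  show ?case
  proof (cases "w = v \<or> w = u")
    case True
    then have "endpt G e True = w \<or> endpt G e False = w" using 2(2) unfolding ee by auto
    then show ?thesis by auto
  next
    case False
    with 2 have w: "w \<in> set (u # vs)" by auto
    have "length (u # vs) = length es + 1" using 2(2) wk_len[of G "u # vs" es] by auto
    then have "es \<noteq> []" using w False by (cases vs) auto
    then show ?thesis using 2 w by auto
  qed
qed auto

definition is_source :: "sgraph \<Rightarrow> (nat \<Rightarrow> bool \<Rightarrow> bool) \<Rightarrow> nat \<Rightarrow> bool" where
  "is_source G arr v \<longleftrightarrow> v \<in> verts G \<and> (\<forall>e\<in>edges G. \<forall>b. endpt G e b = v \<longrightarrow> \<not> arr e b)"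

lemma endpt_in: "signed_graph G \<Longrightarrow> e \<in> edges G \<Longrightarrow> endpt G e b \<in> verts G"
  by (auto simp: signed_graph_def endpt_def)

lemma exists_sink_source:
  assumes sg: "signed_graph G" and ao: "acyclic_orientation G arr" and e0: "e0 \<in> edges G"
  shows "\<exists>v. (is_sink G arr v \<or> is_source G arr v) \<and> (\<exists>e\<in>edges G. \<exists>b. endpt G e b = v)"
proof (rule ccontr)
  assume H: "\<not> ?thesis"
  have H': "(\<exists>e\<in>edges G. \<exists>b. endpt G e b = w \<and> arr e b) \<and> (\<exists>e\<in>edges G. \<exists>b. endpt G e b = w \<and> \<not> arr e b)"
    if "e \<in> edges G" "endpt G e b = w" for e b w
  proof -
    have "w \<in> verts G" using endpt_in[OF sg that(1), of b] that(2) by simp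
    then show ?thesis using H that unfolding is_sink_def is_source_def by blast
  qed
  have fin: "finite (edges G)" using sg by (simp add: signed_graph_def)
  have main: "\<And>vs es. card (edges G) - card (set es) = n \<Longrightarrow> wk G vs es \<Longrightarrow> es \<noteq> [] \<Longrightarrow>
      hd vs = last vs \<Longrightarrow> set es \<subseteq> edges G \<Longrightarrow> \<exists>vs es. is_cycle G arr vs es" for n
  proof (induction n rule: less_induct)
    case (less n vs es)
    show ?case
    proof (cases "\<forall>w\<in>set vs. (\<exists>e\<in>set es. \<exists>b. endpt G e b = w \<and> arr e b) \<and>
        (\<exists>e\<in>set es. \<exists>b. endpt G e b = w \<and> \<not> arr e b)")
      case True
      have len: "length vs = length es + 1" using wk_len[OF less(3)] .
      have "vs ! 0 = hd vs" using len by (cases vs) auto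
      moreover have "vs ! length es = last vs" using len by (simp add: last_conv_nth)
        (metis last_conv_nth length_0_conv nat.distinct(1) add_diff_cancel_right' len)
      ultimately have "is_cycle G arr vs es"
        unfolding is_cycle_def using True len less(4,5) wk_nth[OF less(3)]
        by (auto simp: Suc_le_eq)
      then show ?thesis by blast
    next
      case False
      then obtain w where w: "w \<in> set vs" and lack:
        "\<not> ((\<exists>e\<in>set es. \<exists>b. endpt G e b = w \<and> arr e b) \<and>
        (\<exists>e\<in>set es. \<exists>b. endpt G e b = w \<and> \<not> arr e b))" by blast
      obtain e' b' where "e' \<in> set es" "endpt G e' b' = w" using wk_incident[OF less(3,4) w] by blast
      then have "e' \<in> edges G" using less(6) by auto
      from H'[OF this \<open>endpt G e' b' = w\<close>] lack
      obtain e b where e: "e \<in> edges G" "endpt G e b = w" "e \<notin> set es"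
        by blast
      define x where "x = endpt G e (\<not> b)"
      have ends: "ends G e = (w,x) \<or> ends G e = (x,w)"
        using e(2) unfolding x_def endpt_def by (cases b) auto
      obtain vs1 vs2 where vs: "vs = vs1 @ w # vs2" using split_list[OF w] by blast
      have len: "length vs = length es + 1" using wk_len[OF less(3)] .
      define es1 where "es1 = take (length vs1) es"
      define es2 where "es2 = drop (length vs1) es"
      have les1: "length es1 = length vs1" using len vs unfolding es1_def by auto
      have eses: "es = es1 @ es2" unfolding es1_def es2_def by simp
      have wk': "wk G (vs1 @ w # x # w # vs2) (es1 @ e # e # es2)"
        using wk_splice[of G vs1 w vs2 es1 es2 e x] less(3) vs eses les1 e(1) ends by simp
      have hl: "hd (vs1 @ w # x # w # vs2) = last (vs1 @ w # x # w # vs2)"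
        using less(5) vs by (cases vs1; cases vs2) auto
      have sub: "set (es1 @ e # e # es2) \<subseteq> edges G" using less(6) e(1) eses by auto
      have "set (es1 @ e # e # es2) = insert e (set es)" using eses by auto
      then have "card (set (es1 @ e # e # es2)) = Suc (card (set es))"
        using e(3) by simp
      moreover have "card (set (es1 @ e # e # es2)) \<le> card (edges G)"
        by (rule card_mono[OF fin sub])
      ultimately have lt: "card (edges G) - card (set (es1 @ e # e # es2)) < n"
        using less(2) by simp
      show ?thesis
        by (rule less(1)[OF lt refl wk' _ hl sub]) simp
    qed
  qed
  obtain a b where ab: "ends G e0 = (a,b)" by (cases "ends G e0")
  have "wk G [a,b,a] [e0,e0]" using e0 ab by auto
  then have "\<exists>vs es. is_cycle G arr vs es"
    by (rule main[OF refl]) (use e0 in auto)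
  then show False using ao unfolding acyclic_orientation_def by blast
qed

definition levS :: "int set \<Rightarrow> int" where "levS A = Max (insert 0 (abs ` A))"
definition compS :: "int set \<Rightarrow> bool" where
  "compS A \<longleftrightarrow> (\<forall>x\<in>A. \<forall>j. 1 \<le> j \<and> j \<le> \<bar>x\<bar> \<longrightarrow> (\<exists>y\<in>A. \<bar>y\<bar> = j))"
definition CC :: "sgraph \<Rightarrow> (nat \<Rightarrow> bool \<Rightarrow> bool) \<Rightarrow> (nat \<Rightarrow> int) set" where
  "CC G arr = {\<kappa> \<in> verts G \<rightarrow>\<^sub>E UNIV. proper G \<kappa> \<and> preserves G arr \<kappa> \<and> compS (\<kappa> ` verts G)}"
definition lev :: "sgraph \<Rightarrow> (nat \<Rightarrow> int) \<Rightarrow> int" where "lev G \<kappa> = levS (\<kappa> ` verts G)"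
definition del :: "sgraph \<Rightarrow> nat set \<Rightarrow> sgraph" where
  "del G S = G\<lparr>verts := verts G - S, edges := {e \<in> edges G. fst (ends G e) \<notin> S \<and> snd (ends G e) \<notin> S}\<rparr>"
definition ext :: "nat set \<Rightarrow> nat set \<Rightarrow> int \<Rightarrow> (nat \<Rightarrow> int) \<Rightarrow> nat \<Rightarrow> int" where
  "ext A B k \<kappa> = (\<lambda>v. if v \<in> A then k else if v \<in> B then -k else \<kappa> v)"

lemma levS_ge: "finite A \<Longrightarrow> x \<in> A \<Longrightarrow> \<bar>x\<bar> \<le> levS A"
  unfolding levS_def by (rule Max_ge) auto
lemma levS_nonneg: "finite A \<Longrightarrow> 0 \<le> levS A"
  unfolding levS_def by (rule Max_ge) auto
lemma levS_attained: "finite A \<Longrightarrow> levS A \<noteq> 0 \<Longrightarrow> \<exists>x\<in>A. \<bar>x\<bar> = levS A"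
  unfolding levS_def using Max_in[of "insert 0 (abs ` A)"] by auto
lemma levS_le: "finite A \<Longrightarrow> 0 \<le> k \<Longrightarrow> (\<And>x. x \<in> A \<Longrightarrow> \<bar>x\<bar> \<le> k) \<Longrightarrow> levS A \<le> k"
  unfolding levS_def by (subst Max_le_iff) auto
lemma levS_eq: "finite A \<Longrightarrow> 0 \<le> k \<Longrightarrow> (\<And>x. x \<in> A \<Longrightarrow> \<bar>x\<bar> \<le> k) \<Longrightarrow> x0 \<in> A \<Longrightarrow> \<bar>x0\<bar> = k \<Longrightarrow> levS A = k"
  using levS_le[of A k] levS_ge[of A x0] by fastforce

lemma compS_bound:
  assumes "compS A" "finite A" "x \<in> A"
  shows "\<bar>x\<bar> \<le> int (card A)"
proof -
  have "{1..\<bar>x\<bar>} \<subseteq> abs ` A" using assms(1,3) unfolding compS_def by fastforce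
  then have "card {1..\<bar>x\<bar>} \<le> card (abs ` A)" using assms(2) by (intro card_mono) auto
  also have "\<dots> \<le> card A" using assms(2) by (rule card_image_le)
  finally show ?thesis by simp
qed

lemma finite_CC:
  assumes "finite (verts G)"
  shows "finite (CC G arr)"
proof -
  let ?n = "int (card (verts G))"
  have "CC G arr \<subseteq> verts G \<rightarrow>\<^sub>E {-?n..?n}"
  proof
    fix \<kappa> assume k: "\<kappa> \<in> CC G arr"
    have "\<bar>\<kappa> v\<bar> \<le> ?n" if "v \<in> verts G" for v
    proof -
      have "\<bar>\<kappa> v\<bar> \<le> int (card (\<kappa> ` verts G))"
        using k that assms by (intro compS_bound) (auto simp: CC_def)
      also have "\<dots> \<le> ?n" using assms by (simp add: card_image_le)
      finally show ?thesis .
    qed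
    then show "\<kappa> \<in> verts G \<rightarrow>\<^sub>E {-?n..?n}" using k by (auto simp: CC_def PiE_def Pi_def abs_le_iff) (metis neg_le_iff_le minus_minus)
  qed
  moreover have "finite (verts G \<rightarrow>\<^sub>E {-?n..?n})" using assms by (intro finite_PiE) auto
  ultimately show ?thesis by (rule finite_subset)
qed

lemma del_simps [simp]: "verts (del G S) = verts G - S"
  "edges (del G S) = {e \<in> edges G. fst (ends G e) \<notin> S \<and> snd (ends G e) \<notin> S}"
  "ends (del G S) = ends G" "sgn (del G S) = sgn G"
  by (auto simp: del_def)

lemma del_endpt [simp]: "endpt (del G S) = endpt G" and del_sgnval [simp]: "sgnval (del G S) = sgnval G"
  by (auto simp: endpt_def sgnval_def fun_eq_iff)

lemma del_poset:
  assumes "signed_poset G arr"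
  shows "signed_poset (del G S) arr"
proof -
  have "is_cycle G arr vs es" if "is_cycle (del G S) arr vs es" for vs es
    using that unfolding is_cycle_def by auto
  then show ?thesis using assms
    unfolding signed_poset_def signed_graph_def acyclic_orientation_def orientation_def by auto
qed

lemma sgnval_cases: "sgnval G e = 1 \<or> sgnval G e = -1"
  by (auto simp: sgnval_def)

lemma orient_b:
  assumes "orientation G arr" "e \<in> edges G"
  shows "sgnval G e = 1 \<longleftrightarrow> arr e b \<noteq> arr e (\<not> b)"
  using assms unfolding orientation_def sgnval_def by (cases b) auto

lemma proper_b:
  assumes "proper G \<kappa>" "e \<in> edges G"
  shows "\<kappa> (endpt G e b) \<noteq> sgnval G e * \<kappa> (endpt G e (\<not> b))"
proof (cases b)
  case True then show ?thesis using assms by (auto simp: proper_def endpt_def)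
next
  case False
  have "\<kappa> (fst (ends G e)) \<noteq> sgnval G e * \<kappa> (snd (ends G e))" using assms by (auto simp: proper_def)
  then show ?thesis using False sgnval_cases[of G e] by (auto simp: endpt_def)
qed

lemma top_sink:
  assumes sp: "signed_poset G arr" and k: "\<kappa> \<in> CC G arr" and v: "v \<in> verts G" "\<kappa> v = lev G \<kappa>"
  shows "is_sink G arr v"
  unfolding is_sink_def
proof (intro conjI ballI allI impI v(1))
  fix e b assume e: "e \<in> edges G" and eb: "endpt G e b = v"
  have sg: "signed_graph G" using sp by (simp add: signed_poset_def)
  have fin: "finite (verts G)" using sg by (simp add: signed_graph_def)
  have u: "endpt G e (\<not> b) \<in> verts G" by (rule endpt_in[OF sg e])
  have "\<bar>\<kappa> (endpt G e (\<not> b))\<bar> \<le> lev G \<kappa>" unfolding lev_def using fin u by (intro levS_ge) auto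
  moreover have "\<kappa> v \<noteq> sgnval G e * \<kappa> (endpt G e (\<not> b))" using proper_b[of G \<kappa> e b] k e eb by (auto simp: CC_def)
  moreover have "arr e b \<longleftrightarrow> \<kappa> v > sgnval G e * \<kappa> (endpt G e (\<not> b))" using k e eb by (auto simp: CC_def preserves_def)
  ultimately show "arr e b" using v(2) sgnval_cases[of G e] by auto
qed

lemma bot_source:
  assumes sp: "signed_poset G arr" and k: "\<kappa> \<in> CC G arr" and v: "v \<in> verts G" "\<kappa> v = - lev G \<kappa>"
  shows "is_source G arr v"
  unfolding is_source_def
proof (intro conjI ballI allI impI v(1))
  fix e b assume e: "e \<in> edges G" and eb: "endpt G e b = v"
  have sg: "signed_graph G" using sp by (simp add: signed_poset_def)
  have fin: "finite (verts G)" using sg by (simp add: signed_graph_def)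
  have u: "endpt G e (\<not> b) \<in> verts G" by (rule endpt_in[OF sg e])
  have "\<bar>\<kappa> (endpt G e (\<not> b))\<bar> \<le> lev G \<kappa>" unfolding lev_def using fin u by (intro levS_ge) auto
  moreover have "\<kappa> v \<noteq> sgnval G e * \<kappa> (endpt G e (\<not> b))" using proper_b[of G \<kappa> e b] k e eb by (auto simp: CC_def)
  moreover have "arr e b \<longleftrightarrow> \<kappa> v > sgnval G e * \<kappa> (endpt G e (\<not> b))" using k e eb by (auto simp: CC_def preserves_def)
  ultimately show "\<not> arr e b" using v(2) sgnval_cases[of G e] by auto
qed

lemma ext_CC:
  assumes sp: "signed_poset G arr"
    and A: "A \<subseteq> {v. is_sink G arr v}" and B: "B \<subseteq> {v. is_source G arr v}"
    and AB: "A \<inter> B = {}" and ne: "A \<union> B \<noteq> {}"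
    and k': "\<kappa>' \<in> CC (del G (A \<union> B)) arr" and kdef: "k = lev (del G (A \<union> B)) \<kappa>' + 1"
  shows "ext A B k \<kappa>' \<in> CC G arr" "lev G (ext A B k \<kappa>') = k"
    "{v \<in> verts G. ext A B k \<kappa>' v = k} = A" "{v \<in> verts G. ext A B k \<kappa>' v = - k} = B"
proof -
  let ?S = "A \<union> B" and ?H = "del G (A \<union> B)" and ?k = "ext A B k \<kappa>'"
  have sg: "signed_graph G" using sp by (simp add: signed_poset_def)
  have ao: "orientation G arr" using sp by (simp add: signed_poset_def acyclic_orientation_def)
  have fin: "finite (verts G)" using sg by (simp add: signed_graph_def)
  have AV: "A \<subseteq> verts G" using A by (auto simp: is_sink_def)
  have BV: "B \<subseteq> verts G" using B by (auto simp: is_source_def)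
  have l0: "0 \<le> lev ?H \<kappa>'" unfolding lev_def using fin by (intro levS_nonneg) auto
  have k1: "k \<ge> 1" using l0 kdef by simp
  have small: "\<bar>\<kappa>' v\<bar> \<le> k - 1" if "v \<in> verts G" "v \<notin> ?S" for v
  proof -
    have "\<bar>\<kappa>' v\<bar> \<le> lev ?H \<kappa>'" unfolding lev_def by (rule levS_ge) (use fin that in auto)
    then show ?thesis using kdef by simp
  qed
  have kH: "\<kappa>' \<in> verts G - ?S \<rightarrow>\<^sub>E UNIV" "proper ?H \<kappa>'" "preserves ?H arr \<kappa>'"
      "compS (\<kappa>' ` (verts G - ?S))"
    using k' by (auto simp: CC_def)
  have PE: "?k \<in> verts G \<rightarrow>\<^sub>E UNIV"
    using kH(1) AV BV by (auto simp: ext_def PiE_def extensional_def)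
  have main: "(arr e b \<longleftrightarrow> ?k (endpt G e b) > sgnval G e * ?k (endpt G e (\<not> b))) \<and>
      ?k (endpt G e b) \<noteq> sgnval G e * ?k (endpt G e (\<not> b))" if e: "e \<in> edges G" for e b
  proof -
    define w where "w = endpt G e b"
    define z where "z = endpt G e (\<not> b)"
    have wV: "w \<in> verts G" "z \<in> verts G" unfolding w_def z_def using endpt_in[OF sg e] by auto
    have so: "sgnval G e = 1 \<longleftrightarrow> arr e b \<noteq> arr e (\<not> b)" using orient_b[OF ao e] .
    have wA: "w \<in> A \<Longrightarrow> arr e b" using A e unfolding w_def is_sink_def by auto
    have wB: "w \<in> B \<Longrightarrow> \<not> arr e b" using B e unfolding w_def is_source_def by auto
    have zA: "z \<in> A \<Longrightarrow> arr e (\<not> b)" using A e unfolding z_def is_sink_def by auto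
    have zB: "z \<in> B \<Longrightarrow> \<not> arr e (\<not> b)" using B e unfolding z_def is_source_def by auto
    have inner: "(arr e b \<longleftrightarrow> \<kappa>' w > sgnval G e * \<kappa>' z) \<and> \<kappa>' w \<noteq> sgnval G e * \<kappa>' z"
      if "w \<notin> ?S" "z \<notin> ?S"
    proof -
      have eH: "e \<in> edges ?H" using that e unfolding w_def z_def endpt_def by (cases b) auto
      show ?thesis using kH(3) proper_b[OF kH(2) eH, of b] eH unfolding preserves_def w_def z_def by auto
    qed
    have sw: "\<bar>\<kappa>' w\<bar> \<le> k - 1" if "w \<notin> ?S" using small wV that by auto
    have sz: "\<bar>\<kappa>' z\<bar> \<le> k - 1" if "z \<notin> ?S" using small wV that by auto
    have kw: "?k w = (if w \<in> A then k else if w \<in> B then -k else \<kappa>' w)"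
      "?k z = (if z \<in> A then k else if z \<in> B then -k else \<kappa>' z)" by (auto simp: ext_def)
    show ?thesis unfolding w_def[symmetric] z_def[symmetric] kw
      using sgnval_cases[of G e] so wA wB zA zB inner sw sz k1 AB
      by (cases "w \<in> A"; cases "w \<in> B"; cases "z \<in> A"; cases "z \<in> B"; cases "sgnval G e = 1")
        (auto simp: abs_le_iff)
  qed
  have pres: "preserves G arr ?k" unfolding preserves_def using main by blast
  have prp: "proper G ?k" unfolding proper_def using main[of _ True] by (auto simp: endpt_def)
  obtain v0 where v0: "v0 \<in> ?S" using ne by blast
  have absk: "\<bar>?k v0\<bar> = k" using v0 k1 AB by (auto simp: ext_def)
  have v0V: "v0 \<in> verts G" using v0 AV BV by auto
  have bnd: "\<bar>x\<bar> \<le> k" if "x \<in> ?k ` verts G" for x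
    using that small k1 by (auto simp: ext_def) (meson less_imp_le)
  show levk: "lev G ?k = k" unfolding lev_def
    by (rule levS_eq[OF _ _ bnd _ absk]) (use fin k1 v0V in auto)
  have comp: "compS (?k ` verts G)"
    unfolding compS_def
  proof (intro ballI allI impI)
    fix x j assume x: "x \<in> ?k ` verts G" and j: "1 \<le> j \<and> j \<le> \<bar>x\<bar>"
    show "\<exists>y\<in>?k ` verts G. \<bar>y\<bar> = j"
    proof (cases "j = k")
      case True then show ?thesis using absk v0V by auto
    next
      case False
      then have jk: "j \<le> k - 1" using j bnd[OF x] by auto
      have "lev ?H \<kappa>' \<noteq> 0" using jk j kdef by auto
      then obtain x' where x': "x' \<in> \<kappa>' ` (verts G - ?S)" "\<bar>x'\<bar> = k - 1"
        using levS_attained[of "\<kappa>' ` (verts G - ?S)"] fin kdef unfolding lev_def by auto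
      then obtain y where y: "y \<in> \<kappa>' ` (verts G - ?S)" "\<bar>y\<bar> = j"
      proof -
        have "\<forall>x\<in>\<kappa>' ` (verts G - ?S). \<forall>j. 1 \<le> j \<and> j \<le> \<bar>x\<bar> \<longrightarrow> (\<exists>y\<in>\<kappa>' ` (verts G - ?S). \<bar>y\<bar> = j)"
          using kH(4) unfolding compS_def .
        moreover have jx: "1 \<le> j \<and> j \<le> \<bar>x'\<bar>" using x'(2) jk j by simp
        ultimately have "\<exists>y\<in>\<kappa>' ` (verts G - ?S). \<bar>y\<bar> = j" using x'(1) by blast
        then show ?thesis using that by blast
      qed
      then obtain u where "u \<in> verts G - ?S" "y = \<kappa>' u" by auto
      then have "y = ?k u" "u \<in> verts G" by (auto simp: ext_def)
      then show ?thesis using y by auto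
    qed
  qed
  show "?k \<in> CC G arr" using PE pres prp comp by (simp add: CC_def)
  have nt: "?k v \<noteq> k \<and> ?k v \<noteq> -k" if "v \<in> verts G" "v \<notin> ?S" for v
  proof -
    have "?k v = \<kappa>' v" using that by (simp add: ext_def)
    then show ?thesis using small[OF that] by auto
  qed
  show "{v \<in> verts G. ?k v = k} = A"
  proof (rule set_eqI)
    fix v show "v \<in> {v \<in> verts G. ?k v = k} \<longleftrightarrow> v \<in> A"
      using AV nt[of v] k1 by (cases "v \<in> A"; cases "v \<in> B") (auto simp: ext_def)
  qed
  show "{v \<in> verts G. ?k v = - k} = B"
  proof (rule set_eqI)
    fix v show "v \<in> {v \<in> verts G. ?k v = - k} \<longleftrightarrow> v \<in> B"
      using BV nt[of v] k1 AB by (cases "v \<in> A"; cases "v \<in> B") (auto simp: ext_def)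
  qed
qed

lemma del_edge_endpt:
  assumes "signed_graph G" "e \<in> edges (del G S)"
  shows "endpt G e b \<in> verts G - S"
  using assms by (cases b) (auto simp: endpt_def signed_graph_def)

lemma restr:
  assumes sp: "signed_poset G arr" and k: "\<kappa> \<in> CC G arr" and l: "lev G \<kappa> \<ge> 1"
    and Adef: "A = {v \<in> verts G. \<kappa> v = lev G \<kappa>}" and Bdef: "B = {v \<in> verts G. \<kappa> v = - lev G \<kappa>}"
  shows "restrict \<kappa> (verts G - (A \<union> B)) \<in> CC (del G (A \<union> B)) arr"
    "lev (del G (A \<union> B)) (restrict \<kappa> (verts G - (A \<union> B))) = lev G \<kappa> - 1"
    "ext A B (lev G \<kappa>) (restrict \<kappa> (verts G - (A \<union> B))) = \<kappa>"
    "A \<subseteq> {v. is_sink G arr v}" "B \<subseteq> {v. is_source G arr v}" "A \<inter> B = {}" "A \<union> B \<noteq> {}"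
proof -
  let ?S = "A \<union> B" and ?H = "del G (A \<union> B)" and ?L = "lev G \<kappa>"
  let ?r = "restrict \<kappa> (verts G - ?S)"
  have sg: "signed_graph G" using sp by (simp add: signed_poset_def)
  have fin: "finite (verts G)" using sg by (simp add: signed_graph_def)
  have kG: "\<kappa> \<in> verts G \<rightarrow>\<^sub>E UNIV" "proper G \<kappa>" "preserves G arr \<kappa>" "compS (\<kappa> ` verts G)"
    using k by (auto simp: CC_def)
  have bnd: "\<bar>\<kappa> v\<bar> \<le> ?L" if "v \<in> verts G" for v
    unfolding lev_def by (rule levS_ge) (use fin that in auto)
  have small: "\<bar>\<kappa> v\<bar> \<le> ?L - 1" if "v \<in> verts G" "v \<notin> ?S" for v
  proof -
    have "\<kappa> v \<noteq> ?L" "\<kappa> v \<noteq> - ?L" using that Adef Bdef by auto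
    then show ?thesis using bnd[OF that(1)] by (auto simp: abs_le_iff)
  qed
  have PE: "?r \<in> verts G - ?S \<rightarrow>\<^sub>E UNIV" by (auto simp: restrict_def PiE_def extensional_def)
  have prp: "proper ?H ?r"
    using kG(2) sg unfolding proper_def by (auto simp: signed_graph_def)
  have pres: "preserves ?H arr ?r"
    unfolding preserves_def
  proof (intro ballI allI)
    fix e b assume e: "e \<in> edges ?H"
    have "endpt G e b \<in> verts G - ?S" "endpt G e (\<not> b) \<in> verts G - ?S"
      using del_edge_endpt[OF sg e] by auto
    moreover have "e \<in> edges G" using e by auto
    ultimately show "arr e b \<longleftrightarrow> ?r (endpt ?H e b) > sgnval ?H e * ?r (endpt ?H e (\<not> b))"
      using kG(3) unfolding preserves_def by auto
  qed
  have img: "?r ` (verts G - ?S) = \<kappa> ` (verts G - ?S)" by auto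
  have comp: "compS (?r ` (verts G - ?S))"
    unfolding img compS_def
  proof (intro ballI allI impI)
    fix x j assume x: "x \<in> \<kappa> ` (verts G - ?S)" and j: "1 \<le> j \<and> j \<le> \<bar>x\<bar>"
    obtain v where v: "v \<in> verts G - ?S" "x = \<kappa> v" using x by auto
    have "\<bar>x\<bar> \<le> ?L - 1" using small v by auto
    have "\<forall>x\<in>\<kappa> ` verts G. \<forall>j. 1 \<le> j \<and> j \<le> \<bar>x\<bar> \<longrightarrow> (\<exists>y\<in>\<kappa> ` verts G. \<bar>y\<bar> = j)"
      using kG(4) unfolding compS_def .
    moreover have "x \<in> \<kappa> ` verts G" using v by auto
    ultimately obtain y where y: "y \<in> \<kappa> ` verts G" "\<bar>y\<bar> = j" using j by blast
    then obtain u where u: "u \<in> verts G" "y = \<kappa> u" by auto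
    have "u \<notin> ?S" using u y j \<open>\<bar>x\<bar> \<le> ?L - 1\<close> Adef Bdef by auto
    then show "\<exists>y\<in>\<kappa> ` (verts G - ?S). \<bar>y\<bar> = j" using u y by auto
  qed
  show "?r \<in> CC ?H arr" using PE prp pres comp by (simp add: CC_def)
  have "?L \<noteq> 0" using l by simp
  then obtain x0 where x0: "x0 \<in> \<kappa> ` verts G" "\<bar>x0\<bar> = ?L"
    using levS_attained[of "\<kappa> ` verts G"] fin unfolding lev_def by auto
  then obtain v0 where v0: "v0 \<in> verts G" "\<bar>\<kappa> v0\<bar> = ?L" by auto
  show "?S \<noteq> {}" using v0 Adef Bdef by (auto simp: abs_if split: if_splits)
  show "lev ?H ?r = ?L - 1"
  proof (cases "?L = 1")
    case True
    have "levS (?r ` (verts G - ?S)) \<le> 0"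
      by (rule levS_le) (use fin small True in auto)
    moreover have "levS (?r ` (verts G - ?S)) \<ge> 0" by (rule levS_nonneg) (use fin in auto)
    ultimately show ?thesis using True by (simp add: lev_def)
  next
    case False
    have "\<forall>x\<in>\<kappa> ` verts G. \<forall>j. 1 \<le> j \<and> j \<le> \<bar>x\<bar> \<longrightarrow> (\<exists>y\<in>\<kappa> ` verts G. \<bar>y\<bar> = j)"
      using kG(4) unfolding compS_def .
    moreover have "1 \<le> ?L - 1 \<and> ?L - 1 \<le> \<bar>x0\<bar>" using False l x0 by auto
    ultimately obtain y where y: "y \<in> \<kappa> ` verts G" "\<bar>y\<bar> = ?L - 1" using x0 by blast
    then obtain u where u: "u \<in> verts G" "y = \<kappa> u" by auto
    have uS: "u \<notin> ?S" using u y Adef Bdef by auto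
    have "levS (?r ` (verts G - ?S)) = ?L - 1"
      by (rule levS_eq[of "?r ` (verts G - ?S)" "?L - 1" y]) (use fin small l u uS y in auto)
    then show ?thesis by (simp add: lev_def)
  qed
  show "ext A B ?L ?r = \<kappa>"
  proof
    fix v show "ext A B ?L ?r v = \<kappa> v"
    proof (cases "v \<in> verts G")
      case True then show ?thesis using Adef Bdef by (simp add: ext_def)
    next
      case False
      then have "v \<notin> A" "v \<notin> B" "\<kappa> v = undefined" using Adef Bdef kG(1) by (auto simp: PiE_def extensional_def)
      then show ?thesis using False by (simp add: ext_def)
    qed
  qed
  show "A \<subseteq> {v. is_sink G arr v}" unfolding Adef using top_sink[OF sp k] by blast
  show "B \<subseteq> {v. is_source G arr v}" unfolding Bdef using bot_source[OF sp k] by blast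
  show "A \<inter> B = {}" unfolding Adef Bdef using l by auto
qed

definition fiber :: "sgraph \<Rightarrow> (nat \<Rightarrow> bool \<Rightarrow> bool) \<Rightarrow> nat set \<Rightarrow> nat set \<Rightarrow> (nat \<Rightarrow> int) set" where
  "fiber G arr A B = {\<kappa> \<in> CC G arr. lev G \<kappa> \<ge> 1 \<and> {v \<in> verts G. \<kappa> v = lev G \<kappa>} = A \<and>
      {v \<in> verts G. \<kappa> v = - lev G \<kappa>} = B}"

lemma fiber_sum:
  assumes sp: "signed_poset G arr"
    and A: "A \<subseteq> {v. is_sink G arr v}" and B: "B \<subseteq> {v. is_source G arr v}"
    and AB: "A \<inter> B = {}" and ne: "A \<union> B \<noteq> {}"
  shows "(\<Sum>\<kappa>\<in>fiber G arr A B. h \<kappa>) =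
    (\<Sum>\<kappa>'\<in>CC (del G (A \<union> B)) arr. h (ext A B (lev (del G (A \<union> B)) \<kappa>' + 1) \<kappa>'))"
proof -
  let ?H = "del G (A \<union> B)"
  let ?F = "\<lambda>\<kappa>'. ext A B (lev ?H \<kappa>' + 1) \<kappa>'"
  have eq: "fiber G arr A B = ?F ` CC ?H arr"
  proof
    show "?F ` CC ?H arr \<subseteq> fiber G arr A B"
    proof
      fix \<kappa> assume "\<kappa> \<in> ?F ` CC ?H arr"
      then obtain \<kappa>' where k': "\<kappa>' \<in> CC ?H arr" "\<kappa> = ?F \<kappa>'" by auto
      have l0: "0 \<le> lev ?H \<kappa>'" unfolding lev_def using sp
        by (intro levS_nonneg) (auto simp: signed_poset_def signed_graph_def)
      note E = ext_CC[OF sp A B AB ne k'(1) refl]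
      have "?F \<kappa>' \<in> fiber G arr A B" unfolding fiber_def
      proof (intro CollectI conjI)
        show "?F \<kappa>' \<in> CC G arr" by (rule E(1))
        show "1 \<le> lev G (?F \<kappa>')" unfolding E(2) using l0 by simp
        show "{v \<in> verts G. ?F \<kappa>' v = lev G (?F \<kappa>')} = A" unfolding E(2) by (rule E(3))
        show "{v \<in> verts G. ?F \<kappa>' v = - lev G (?F \<kappa>')} = B" unfolding E(2) by (rule E(4))
      qed
      then show "\<kappa> \<in> fiber G arr A B" unfolding k'(2) .
    qed
    show "fiber G arr A B \<subseteq> ?F ` CC ?H arr"
    proof
      fix \<kappa> assume "\<kappa> \<in> fiber G arr A B"
      then have k: "\<kappa> \<in> CC G arr" "lev G \<kappa> \<ge> 1" "A = {v \<in> verts G. \<kappa> v = lev G \<kappa>}"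
        "B = {v \<in> verts G. \<kappa> v = - lev G \<kappa>}" unfolding fiber_def by auto
      note R = restr[OF sp k]
      have "lev ?H (restrict \<kappa> (verts G - (A \<union> B))) + 1 = lev G \<kappa>" using R(2) by simp
      then have "?F (restrict \<kappa> (verts G - (A \<union> B))) = \<kappa>" using R(3) by (simp only:)
      then show "\<kappa> \<in> ?F ` CC ?H arr" by (rule image_eqI[OF sym R(1)])
    qed
  qed
  have inj: "inj_on ?F (CC ?H arr)"
  proof
    fix k1 k2 assume k1: "k1 \<in> CC ?H arr" and k2: "k2 \<in> CC ?H arr" and F: "?F k1 = ?F k2"
    show "k1 = k2"
    proof
      fix v
      show "k1 v = k2 v"
      proof (cases "v \<in> verts G - (A \<union> B)")
        case True
        then have "?F k1 v = k1 v" "?F k2 v = k2 v" by (auto simp: ext_def)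
        then show ?thesis using fun_cong[OF F, of v] by simp
      next
        case False
        then show ?thesis using k1 k2 by (auto simp: CC_def PiE_def extensional_def)
      qed
    qed
  qed
  show ?thesis unfolding eq by (rule sum.reindex[OF inj, unfolded comp_def])
qed

lemma neg1_pow_diff:
  assumes "k \<le> n"
  shows "(-1::'a::comm_ring_1) ^ (n - k) = (-1) ^ n * (-1) ^ k"
proof -
  obtain d where n: "n = k + d" using assms le_Suc_ex by blast
  have "(-1::'a) ^ k * (-1) ^ k = 1"
    by (simp add: power_add[symmetric] mult_2[symmetric] power_mult)
  then show ?thesis unfolding n by (simp add: power_add algebra_simps)
qed

lemma neg1_sq: "(-1::'a::comm_ring_1) ^ n * (-1) ^ n = 1"
  by (simp add: power_add[symmetric] mult_2[symmetric] power_mult)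

lemma lev_nonneg: "signed_poset G arr \<Longrightarrow> 0 \<le> lev G \<kappa>"
  unfolding lev_def by (rule levS_nonneg) (auto simp: signed_poset_def signed_graph_def)

lemma lev0_set:
  assumes sp: "signed_poset G arr"
  shows "{\<kappa> \<in> CC G arr. lev G \<kappa> = 0} = (if edges G = {} then {restrict (\<lambda>_. 0) (verts G)} else {})"
proof -
  have sg: "signed_graph G" using sp by (simp add: signed_poset_def)
  have fin: "finite (verts G)" using sg by (simp add: signed_graph_def)
  have zero: "\<kappa> = restrict (\<lambda>_. 0) (verts G)" if "\<kappa> \<in> CC G arr" "lev G \<kappa> = 0" for \<kappa>
  proof
    fix v show "\<kappa> v = restrict (\<lambda>_. 0) (verts G) v"
    proof (cases "v \<in> verts G")
      case True
      have "\<bar>\<kappa> v\<bar> \<le> lev G \<kappa>" unfolding lev_def by (rule levS_ge) (use fin True in auto)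
      then show ?thesis using that True by simp
    next
      case False then show ?thesis using that by (auto simp: CC_def PiE_def extensional_def)
    qed
  qed
  show ?thesis
  proof (cases "edges G = {}")
    case True
    have "restrict (\<lambda>_. 0) (verts G) \<in> CC G arr"
      using True by (auto simp: CC_def proper_def preserves_def compS_def)
    moreover have "lev G (restrict (\<lambda>_. 0) (verts G)) = 0"
      unfolding lev_def using levS_le[of "restrict (\<lambda>_. 0) (verts G) ` verts G" 0]
        levS_nonneg[of "restrict (\<lambda>_. 0) (verts G) ` verts G"] fin by auto
    ultimately have "{\<kappa> \<in> CC G arr. lev G \<kappa> = 0} = {restrict (\<lambda>_. 0) (verts G)}"
      using zero by blast
    then show ?thesis using True by simp
  next
    case False
    then obtain e where e: "e \<in> edges G" by blast
    have "\<not> (\<kappa> \<in> CC G arr \<and> lev G \<kappa> = 0)" for \<kappa>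
    proof
      assume a: "\<kappa> \<in> CC G arr \<and> lev G \<kappa> = 0"
      then have "\<kappa> = restrict (\<lambda>_. 0) (verts G)" using zero by blast
      moreover have "fst (ends G e) \<in> verts G" "snd (ends G e) \<in> verts G" using sg e by (auto simp: signed_graph_def)
      moreover have "proper G \<kappa>" using a by (simp add: CC_def)
      ultimately show False using e by (auto simp: proper_def)
    qed
    then have "{\<kappa> \<in> CC G arr. lev G \<kappa> = 0} = {}" by blast
    then show ?thesis using False by simp
  qed
qed

lemma sumA:
  "signed_poset G arr \<Longrightarrow> (\<Sum>\<kappa>\<in>CC G arr. (-1::int) ^ nat (lev G \<kappa>)) = (-1) ^ card (verts G)"
proof (induction "card (verts G)" arbitrary: G rule: less_induct)
  case less
  note sp = less.prems
  have sg: "signed_graph G" using sp by (simp add: signed_poset_def)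
  have ao: "acyclic_orientation G arr" using sp by (simp add: signed_poset_def)
  have fin: "finite (verts G)" using sg by (simp add: signed_graph_def)
  have finC: "finite (CC G arr)" by (rule finite_CC[OF fin])
  define n where "n = card (verts G)"
  define Sk where "Sk = {v. is_sink G arr v}"
  define So where "So = {v. is_source G arr v}"
  have SkV: "Sk \<subseteq> verts G" unfolding Sk_def is_sink_def by auto
  have SoV: "So \<subseteq> verts G" unfolding So_def is_source_def by auto
  have finSk: "finite Sk" "finite So" using SkV SoV fin finite_subset by auto
  define Pairs where "Pairs = {(A,B). A \<subseteq> Sk \<and> B \<subseteq> So \<and> A \<inter> B = {} \<and> A \<union> B \<noteq> {}}"
  have finP: "finite Pairs"
  proof -
    have "Pairs \<subseteq> Pow Sk \<times> Pow So" unfolding Pairs_def by auto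
    then show ?thesis using finSk by (meson finite_Pow_iff finite_SigmaI finite_subset)
  qed
  define f where "f = (\<lambda>\<kappa>. (-1::int) ^ nat (lev G \<kappa>))"
  define S1 where "S1 = {\<kappa> \<in> CC G arr. lev G \<kappa> \<ge> 1}"
  have split: "CC G arr = {\<kappa> \<in> CC G arr. lev G \<kappa> = 0} \<union> S1"
  proof -
    have "lev G \<kappa> = 0 \<or> lev G \<kappa> \<ge> 1" for \<kappa> using lev_nonneg[OF sp, of \<kappa>] by linarith
    then show ?thesis unfolding S1_def by auto
  qed
  have sum_split: "sum f (CC G arr) = sum f {\<kappa> \<in> CC G arr. lev G \<kappa> = 0} + sum f S1"
    by (subst split, rule sum.union_disjoint) (use finC in \<open>auto simp: S1_def\<close>)
  have Z: "sum f {\<kappa> \<in> CC G arr. lev G \<kappa> = 0} = (if edges G = {} then 1 else 0)"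
  proof -
    have "lev G (restrict (\<lambda>_. 0) (verts G)) = 0" if "edges G = {}"
      using lev0_set[OF sp] that by auto
    then show ?thesis unfolding lev0_set[OF sp] f_def by auto
  qed
  define g where "g = (\<lambda>\<kappa>. ({v \<in> verts G. \<kappa> v = lev G \<kappa>}, {v \<in> verts G. \<kappa> v = - lev G \<kappa>}))"
  have gS: "g ` S1 \<subseteq> Pairs"
  proof
    fix p assume "p \<in> g ` S1"
    then obtain \<kappa> where k: "\<kappa> \<in> CC G arr" "lev G \<kappa> \<ge> 1" "p = g \<kappa>" unfolding S1_def by auto
    note R = restr[OF sp k(1,2) refl refl]
    show "p \<in> Pairs" using R(4-7) k(3) unfolding Pairs_def g_def Sk_def So_def by auto
  qed
  have finS1: "finite S1" using finC unfolding S1_def by auto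
  have grp: "sum f S1 = (\<Sum>p\<in>Pairs. sum f {\<kappa> \<in> S1. g \<kappa> = p})"
    using sum.group[OF finS1 finP gS, of f] by simp
  have fib: "{\<kappa> \<in> S1. g \<kappa> = p} = fiber G arr (fst p) (snd p)" for p
    unfolding S1_def g_def fiber_def by (cases p) auto
  have inner: "sum f {\<kappa> \<in> S1. g \<kappa> = p} = - ((-1) ^ n * (-1) ^ (card (fst p) + card (snd p)))"
    if p: "p \<in> Pairs" for p
  proof -
    obtain A B where pAB: "p = (A,B)" by (cases p)
    have A: "A \<subseteq> {v. is_sink G arr v}" and B: "B \<subseteq> {v. is_source G arr v}"
      and AB: "A \<inter> B = {}" and ne: "A \<union> B \<noteq> {}"
      using p unfolding pAB Pairs_def Sk_def So_def by auto
    let ?H = "del G (A \<union> B)"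
    have spH: "signed_poset ?H arr" by (rule del_poset[OF sp])
    have ABV: "A \<union> B \<subseteq> verts G" using A B SkV SoV unfolding Sk_def So_def by auto
    have cardH: "card (verts ?H) = n - (card A + card B)"
    proof -
      have "card (verts G - (A \<union> B)) = card (verts G) - card (A \<union> B)"
        using ABV fin by (intro card_Diff_subset) (auto intro: finite_subset)
      moreover have "card (A \<union> B) = card A + card B"
        using ABV fin AB by (intro card_Un_disjoint) (auto intro: finite_subset)
      ultimately show ?thesis by (simp add: n_def)
    qed
    have le: "card A + card B \<le> n"
    proof -
      have "card (A \<union> B) \<le> n" unfolding n_def using ABV fin by (intro card_mono)
      moreover have "card (A \<union> B) = card A + card B"
        using ABV fin AB by (intro card_Un_disjoint) (auto intro: finite_subset)
      ultimately show ?thesis by simp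
    qed
    have lt: "card (verts ?H) < card (verts G)"
    proof -
      have "verts ?H \<subset> verts G" using ABV ne by auto
      then show ?thesis using fin by (rule psubset_card_mono[rotated])
    qed
    have IH: "(\<Sum>\<kappa>\<in>CC ?H arr. (-1::int) ^ nat (lev ?H \<kappa>)) = (-1) ^ card (verts ?H)"
      by (rule less.hyps[OF lt spH])
    have "sum f {\<kappa> \<in> S1. g \<kappa> = p} = sum f (fiber G arr A B)" unfolding fib pAB by simp
    also have "\<dots> = (\<Sum>\<kappa>'\<in>CC ?H arr. f (ext A B (lev ?H \<kappa>' + 1) \<kappa>'))"
      by (rule fiber_sum[OF sp A B AB ne])
    also have "\<dots> = (\<Sum>\<kappa>'\<in>CC ?H arr. - ((-1::int) ^ nat (lev ?H \<kappa>')))"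
    proof (rule sum.cong[OF refl])
      fix \<kappa>' assume k': "\<kappa>' \<in> CC ?H arr"
      have "lev G (ext A B (lev ?H \<kappa>' + 1) \<kappa>') = lev ?H \<kappa>' + 1"
        by (rule ext_CC(2)[OF sp A B AB ne k' refl])
      moreover have "0 \<le> lev ?H \<kappa>'" by (rule lev_nonneg[OF spH])
      ultimately show "f (ext A B (lev ?H \<kappa>' + 1) \<kappa>') = - ((-1::int) ^ nat (lev ?H \<kappa>'))"
        unfolding f_def by (simp add: nat_add_distrib)
    qed
    also have "\<dots> = - ((-1) ^ (n - (card A + card B)))"
      using IH cardH by (simp add: sum_negf)
    also have "\<dots> = - ((-1) ^ n * (-1) ^ (card A + card B))"
      using neg1_pow_diff[OF le] by simp
    finally show ?thesis unfolding pAB by simp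
  qed
  have PLeq: "PL Sk So = 1 + (\<Sum>p\<in>Pairs. (-1) ^ (card (fst p) + card (snd p)))"
  proof -
    have eq: "Sigma (Pow Sk) (\<lambda>A. Pow (So - A)) = insert ({},{}) Pairs"
    proof (rule set_eqI)
      fix p :: "nat set \<times> nat set"
      obtain A B where p: "p = (A,B)" by (cases p)
      show "p \<in> Sigma (Pow Sk) (\<lambda>A. Pow (So - A)) \<longleftrightarrow> p \<in> insert ({},{}) Pairs"
        unfolding p Pairs_def by blast
    qed
    have "({},{}) \<notin> Pairs" unfolding Pairs_def by auto
    then show ?thesis unfolding PL_def eq using finP by simp
  qed
  define s where "s = (\<Sum>p\<in>Pairs. (-1::int) ^ (card (fst p) + card (snd p)))"
  have total: "sum f (CC G arr) = (if edges G = {} then 1 else 0) - (-1) ^ n * s"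
    unfolding sum_split Z grp s_def using inner by (simp add: sum_negf sum_distrib_left)
  show ?case
  proof (cases "edges G = {}")
    case True
    have "Sk = verts G" "So = verts G" using True unfolding Sk_def So_def is_sink_def is_source_def by auto
    then have "PL Sk So = (-1) ^ n" using PL_same[OF fin] by (simp add: n_def)
    then have "s = (-1) ^ n - 1" using PLeq s_def by simp
    then have "sum f (CC G arr) = 1 - (-1) ^ n * ((-1) ^ n - 1)" using total True by simp
    also have "\<dots> = (-1) ^ n" using neg1_sq[of n, where 'a=int] by (simp add: right_diff_distrib)
    finally have "sum f (CC G arr) = (-1) ^ n" .
    then show ?thesis by (simp add: f_def n_def)
  next
    case False
    then obtain e0 where e0: "e0 \<in> edges G" by blast
    obtain v e b where v: "is_sink G arr v \<or> is_source G arr v" "e \<in> edges G" "endpt G e b = v"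
      using exists_sink_source[OF sg ao e0] by blast
    have "PL Sk So = 0"
    proof (cases "is_sink G arr v")
      case True
      then have "v \<notin> So" using v unfolding So_def is_source_def is_sink_def by blast
      then have "\<not> Sk \<subseteq> So" using True unfolding Sk_def by auto
      then show ?thesis using PL_zero[OF finSk(2) finSk(1)] PL_swap by metis
    next
      case False
      then have "is_source G arr v" using v by auto
      then have "v \<notin> Sk" using v unfolding Sk_def is_source_def is_sink_def by blast
      then have "\<not> So \<subseteq> Sk" using \<open>is_source G arr v\<close> unfolding So_def by auto
      then show ?thesis using PL_zero[OF finSk(1) finSk(2)] by metis
    qed
    then have "s = -1" using PLeq s_def by simp
    then have "sum f (CC G arr) = (-1) ^ n" using total False by simp
    then show ?thesis by (simp add: f_def n_def)
  qed
qed

lemma sumB: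
  fixes x :: "'a::comm_ring_1"
  assumes sp: "signed_poset G arr"
  shows "(\<Sum>\<kappa>\<in>{\<kappa> \<in> CC G arr. lev G \<kappa> \<ge> 1 \<and> {v \<in> verts G. \<kappa> v = - lev G \<kappa>} = {}}.
           x ^ card {v \<in> verts G. \<kappa> v = lev G \<kappa>} *
           (-1) ^ (card (verts G) - card {v \<in> verts G. \<kappa> v = lev G \<kappa>} + nat (lev G \<kappa>) - 1))
       = (\<Sum>A\<in>Pow {v. is_sink G arr v} - {{}}. x ^ card A)"
proof -
  have sg: "signed_graph G" using sp by (simp add: signed_poset_def)
  have fin: "finite (verts G)" using sg by (simp add: signed_graph_def)
  have finC: "finite (CC G arr)" by (rule finite_CC[OF fin])
  define n where "n = card (verts G)"
  define Sk where "Sk = {v. is_sink G arr v}"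
  have SkV: "Sk \<subseteq> verts G" unfolding Sk_def is_sink_def by auto
  have finSk: "finite Sk" using SkV fin finite_subset by auto
  define S2 where "S2 = {\<kappa> \<in> CC G arr. lev G \<kappa> \<ge> 1 \<and> {v \<in> verts G. \<kappa> v = - lev G \<kappa>} = {}}"
  define h where "h = (\<lambda>\<kappa>. x ^ card {v \<in> verts G. \<kappa> v = lev G \<kappa>} *
           (-1) ^ (n - card {v \<in> verts G. \<kappa> v = lev G \<kappa>} + nat (lev G \<kappa>) - 1))"
  define g where "g = (\<lambda>\<kappa>. {v \<in> verts G. \<kappa> v = lev G \<kappa>})"
  define T where "T = Pow Sk - {{}}"
  have finT: "finite T" unfolding T_def using finSk by simp
  have finS2: "finite S2" using finC unfolding S2_def by auto
  have gS: "g ` S2 \<subseteq> T"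
  proof
    fix A assume "A \<in> g ` S2"
    then obtain \<kappa> where k: "\<kappa> \<in> CC G arr" "lev G \<kappa> \<ge> 1" "{v \<in> verts G. \<kappa> v = - lev G \<kappa>} = {}" "A = g \<kappa>"
      unfolding S2_def by auto
    note R = restr[OF sp k(1,2) refl refl]
    show "A \<in> T" using R(4) R(7) k(3,4) unfolding T_def g_def Sk_def by auto
  qed
  have grp: "sum h S2 = (\<Sum>A\<in>T. sum h {\<kappa> \<in> S2. g \<kappa> = A})"
    using sum.group[OF finS2 finT gS, of h] by simp
  have inner: "sum h {\<kappa> \<in> S2. g \<kappa> = A} = x ^ card A" if A: "A \<in> T" for A
  proof -
    have As: "A \<subseteq> {v. is_sink G arr v}" and Ane: "A \<union> {} \<noteq> {}" using A unfolding T_def Sk_def by auto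
    have B: "{} \<subseteq> {v. is_source G arr v}" and AB: "A \<inter> {} = {}" by auto
    let ?H = "del G A"
    have spH: "signed_poset ?H arr" by (rule del_poset[OF sp])
    have AV: "A \<subseteq> verts G" using As SkV unfolding Sk_def by auto
    have cardH: "card (verts ?H) = n - card A"
      unfolding n_def using AV fin by (simp add: card_Diff_subset finite_subset)
    have IH: "(\<Sum>\<kappa>\<in>CC ?H arr. (-1::int) ^ nat (lev ?H \<kappa>)) = (-1) ^ card (verts ?H)"
      by (rule sumA[OF spH])
    have IH': "(\<Sum>\<kappa>\<in>CC ?H arr. (-1::'a) ^ nat (lev ?H \<kappa>)) = (-1) ^ (n - card A)"
    proof -
      have "(\<Sum>\<kappa>\<in>CC ?H arr. (-1::'a) ^ nat (lev ?H \<kappa>)) = of_int (\<Sum>\<kappa>\<in>CC ?H arr. (-1::int) ^ nat (lev ?H \<kappa>))"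
        by simp
      then show ?thesis using IH cardH by simp
    qed
    have fibeq: "{\<kappa> \<in> S2. g \<kappa> = A} = fiber G arr A {}"
      unfolding S2_def g_def fiber_def by auto
    have "sum h {\<kappa> \<in> S2. g \<kappa> = A} = sum h (fiber G arr A {})" unfolding fibeq ..
    also have "\<dots> = (\<Sum>\<kappa>'\<in>CC ?H arr. h (ext A {} (lev ?H \<kappa>' + 1) \<kappa>'))"
      using fiber_sum[OF sp As B AB Ane, of h] by simp
    also have "\<dots> = (\<Sum>\<kappa>'\<in>CC ?H arr. x ^ card A * (-1) ^ (n - card A) * (-1) ^ nat (lev ?H \<kappa>'))"
    proof (rule sum.cong[OF refl])
      fix \<kappa>' assume k': "\<kappa>' \<in> CC ?H arr"
      have k'': "\<kappa>' \<in> CC (del G (A \<union> {})) arr" using k' by simp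
      note E = ext_CC[OF sp As B AB Ane k'' refl]
      have l0: "0 \<le> lev ?H \<kappa>'" by (rule lev_nonneg[OF spH])
      have e2: "lev G (ext A {} (lev ?H \<kappa>' + 1) \<kappa>') = lev ?H \<kappa>' + 1" using E(2) by simp
      have e3: "{v \<in> verts G. ext A {} (lev ?H \<kappa>' + 1) \<kappa>' v = lev ?H \<kappa>' + 1} = A"
        using E(3) by simp
      have cA: "card A \<le> n" unfolding n_def using AV fin by (rule card_mono[rotated])
      have "n - card A + nat (lev ?H \<kappa>' + 1) - 1 = (n - card A) + nat (lev ?H \<kappa>')"
        using l0 by (simp add: nat_add_distrib)
      then show "h (ext A {} (lev ?H \<kappa>' + 1) \<kappa>') = x ^ card A * (-1) ^ (n - card A) * (-1) ^ nat (lev ?H \<kappa>')"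
        unfolding h_def e2 e3 by (simp add: power_add mult.assoc)
    qed
    also have "\<dots> = x ^ card A * (-1) ^ (n - card A) * (\<Sum>\<kappa>'\<in>CC ?H arr. (-1) ^ nat (lev ?H \<kappa>'))"
      by (simp add: sum_distrib_left)
    also have "\<dots> = x ^ card A" unfolding IH' by (simp add: mult.assoc neg1_sq)
    finally show ?thesis .
  qed
  have "sum h S2 = (\<Sum>A\<in>T. x ^ card A)" unfolding grp using inner by simp
  then show ?thesis unfolding h_def S2_def T_def Sk_def n_def .
qed

definition levm :: "int multiset \<Rightarrow> int" where "levm m = levS (set_mset m)"

definition psi :: "int multiset \<Rightarrow> rat poly" where
  "psi m = (-1) ^ (size m + nat (levm m)) +
     (if levm m \<ge> 1 \<and> count m (- levm m) = 0
      then ([:0,1:] - 1) ^ count m (levm m) * (-1) ^ (size m - count m (levm m) + nat (levm m) - 1)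
      else 0)"

definition Phi :: "(int multiset \<Rightarrow> rat) \<Rightarrow> rat poly" where
  "Phi f = (\<Sum>m\<in>{m. compS (set_mset m) \<and> f m \<noteq> 0}. smult (f m) (psi m))"

definition Ms :: "sgraph \<Rightarrow> (nat \<Rightarrow> int) \<Rightarrow> int multiset" where
  "Ms G \<kappa> = image_mset \<kappa> (mset_set (verts G))"

lemma Ms_set: "finite (verts G) \<Longrightarrow> set_mset (Ms G \<kappa>) = \<kappa> ` verts G"
  by (simp add: Ms_def)

lemma Ms_count: "finite (verts G) \<Longrightarrow> count (Ms G \<kappa>) y = card {v \<in> verts G. \<kappa> v = y}"
proof -
  assume fin: "finite (verts G)"
  have "count (Ms G \<kappa>) y = (\<Sum>v\<in>\<kappa> -` {y} \<inter> verts G. 1)"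
    unfolding Ms_def count_image_mset using fin by (intro sum.cong) auto
  also have "\<kappa> -` {y} \<inter> verts G = {v \<in> verts G. \<kappa> v = y}" by auto
  finally show ?thesis by simp
qed

lemma Ycoef_CC:
  assumes sp: "signed_poset G arr" and c: "compS (set_mset m)"
  shows "Ycoef G arr m = of_nat (card {\<kappa> \<in> CC G arr. Ms G \<kappa> = m})"
proof -
  have fin: "finite (verts G)" using sp by (simp add: signed_poset_def signed_graph_def)
  have "{\<kappa> \<in> verts G \<rightarrow>\<^sub>E (UNIV :: int set). proper G \<kappa> \<and> preserves G arr \<kappa> \<and>
       image_mset \<kappa> (mset_set (verts G)) = m} = {\<kappa> \<in> CC G arr. Ms G \<kappa> = m}"
  proof (rule set_eqI, rule iffI)
    fix \<kappa> assume a: "\<kappa> \<in> {\<kappa> \<in> verts G \<rightarrow>\<^sub>E (UNIV :: int set). proper G \<kappa> \<and> preserves G arr \<kappa> \<and>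
       image_mset \<kappa> (mset_set (verts G)) = m}"
    then have "Ms G \<kappa> = m" by (simp add: Ms_def)
    then have "compS (\<kappa> ` verts G)" using c Ms_set[OF fin, of \<kappa>] by simp
    then show "\<kappa> \<in> {\<kappa> \<in> CC G arr. Ms G \<kappa> = m}" using a \<open>Ms G \<kappa> = m\<close> by (simp add: CC_def)
  next
    fix \<kappa> assume "\<kappa> \<in> {\<kappa> \<in> CC G arr. Ms G \<kappa> = m}"
    then show "\<kappa> \<in> {\<kappa> \<in> verts G \<rightarrow>\<^sub>E (UNIV :: int set). proper G \<kappa> \<and> preserves G arr \<kappa> \<and>
       image_mset \<kappa> (mset_set (verts G)) = m}" by (simp add: CC_def Ms_def)
  qed
  then show ?thesis unfolding Ycoef_def by simp
qed

lemma Ysupp: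
  assumes sp: "signed_poset G arr"
  shows "{m. compS (set_mset m) \<and> Ycoef G arr m \<noteq> 0} \<subseteq> Ms G ` CC G arr"
proof
  fix m assume "m \<in> {m. compS (set_mset m) \<and> Ycoef G arr m \<noteq> 0}"
  then have c: "compS (set_mset m)" and nz: "Ycoef G arr m \<noteq> 0" by auto
  then have "card {\<kappa> \<in> CC G arr. Ms G \<kappa> = m} \<noteq> 0" using Ycoef_CC[OF sp c] by auto
  then have "{\<kappa> \<in> CC G arr. Ms G \<kappa> = m} \<noteq> {}" by (metis card.empty)
  then obtain \<kappa> where "\<kappa> \<in> CC G arr" "Ms G \<kappa> = m" by blast
  then show "m \<in> Ms G ` CC G arr" by auto
qed

lemma Phi_Y:
  assumes sp: "signed_poset G arr"
  shows "Phi (Ycoef G arr) = (\<Sum>\<kappa>\<in>CC G arr. psi (Ms G \<kappa>))"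
proof -
  have fin: "finite (verts G)" using sp by (simp add: signed_poset_def signed_graph_def)
  have finC: "finite (CC G arr)" by (rule finite_CC[OF fin])
  let ?M = "Ms G ` CC G arr"
  have finM: "finite ?M" using finC by simp
  have compM: "compS (set_mset m)" if "m \<in> ?M" for m
    using that Ms_set[OF fin] by (auto simp: CC_def)
  have "Phi (Ycoef G arr) = (\<Sum>m\<in>?M. smult (Ycoef G arr m) (psi m))"
    unfolding Phi_def
    by (rule sum.mono_neutral_left[OF finM Ysupp[OF sp]]) (use compM in auto)
  also have "\<dots> = (\<Sum>m\<in>?M. \<Sum>\<kappa>\<in>{\<kappa> \<in> CC G arr. Ms G \<kappa> = m}. psi (Ms G \<kappa>))"
  proof (rule sum.cong[OF refl])
    fix m assume m: "m \<in> ?M"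
    have "(\<Sum>\<kappa>\<in>{\<kappa> \<in> CC G arr. Ms G \<kappa> = m}. psi (Ms G \<kappa>)) = (\<Sum>\<kappa>\<in>{\<kappa> \<in> CC G arr. Ms G \<kappa> = m}. psi m)"
      by (rule sum.cong) auto
    also have "\<dots> = of_nat (card {\<kappa> \<in> CC G arr. Ms G \<kappa> = m}) * psi m" by simp
    finally show "smult (Ycoef G arr m) (psi m) = (\<Sum>\<kappa>\<in>{\<kappa> \<in> CC G arr. Ms G \<kappa> = m}. psi (Ms G \<kappa>))"
      unfolding Ycoef_CC[OF sp compM[OF m]] by (simp add: of_nat_mult_conv_smult)
  qed
  also have "\<dots> = (\<Sum>\<kappa>\<in>CC G arr. psi (Ms G \<kappa>))"
    by (rule sum.group[OF finC finM]) auto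
  finally show ?thesis .
qed

lemma Phi_Y_val:
  assumes sp: "signed_poset G arr"
  shows "Phi (Ycoef G arr) = [:0, 1:] ^ sinks G arr"
proof -
  have fin: "finite (verts G)" using sp by (simp add: signed_poset_def signed_graph_def)
  have finC: "finite (CC G arr)" by (rule finite_CC[OF fin])
  define n where "n = card (verts G)"
  define x :: "rat poly" where "x = [:0,1:] - 1"
  define Sk where "Sk = {v. is_sink G arr v}"
  have SkV: "Sk \<subseteq> verts G" unfolding Sk_def is_sink_def by auto
  have finSk: "finite Sk" using SkV fin finite_subset by auto
  define P2 where "P2 = (\<lambda>\<kappa>. lev G \<kappa> \<ge> 1 \<and> {v \<in> verts G. \<kappa> v = - lev G \<kappa>} = {})"
  define h where "h = (\<lambda>\<kappa>. x ^ card {v \<in> verts G. \<kappa> v = lev G \<kappa>} *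
           (-1) ^ (n - card {v \<in> verts G. \<kappa> v = lev G \<kappa>} + nat (lev G \<kappa>) - 1))"
  have psi_eq: "psi (Ms G \<kappa>) = (-1) ^ n * (-1) ^ nat (lev G \<kappa>) + (if P2 \<kappa> then h \<kappa> else 0)"
    if "\<kappa> \<in> CC G arr" for \<kappa>
  proof -
    have sz: "size (Ms G \<kappa>) = n" by (simp add: Ms_def n_def)
    have lv: "levm (Ms G \<kappa>) = lev G \<kappa>" by (simp add: levm_def lev_def Ms_set[OF fin])
    have fs: "finite {v \<in> verts G. \<kappa> v = - lev G \<kappa>}" using fin by simp
    have "count (Ms G \<kappa>) (- lev G \<kappa>) = 0 \<longleftrightarrow> {v \<in> verts G. \<kappa> v = - lev G \<kappa>} = {}"
      unfolding Ms_count[OF fin] using fs by simp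
    then show ?thesis unfolding psi_def sz lv P2_def h_def x_def Ms_count[OF fin]
      by (simp add: power_add)
  qed
  have "Phi (Ycoef G arr) = (\<Sum>\<kappa>\<in>CC G arr. (-1) ^ n * (-1) ^ nat (lev G \<kappa>) + (if P2 \<kappa> then h \<kappa> else 0))"
    unfolding Phi_Y[OF sp] using psi_eq by (intro sum.cong) auto
  also have "\<dots> = (-1) ^ n * (\<Sum>\<kappa>\<in>CC G arr. (-1) ^ nat (lev G \<kappa>)) + (\<Sum>\<kappa>\<in>{\<kappa> \<in> CC G arr. P2 \<kappa>}. h \<kappa>)"
    by (simp add: sum.distrib sum_distrib_left sum.inter_filter[OF finC])
  also have "(\<Sum>\<kappa>\<in>CC G arr. (-1::rat poly) ^ nat (lev G \<kappa>)) = of_int (\<Sum>\<kappa>\<in>CC G arr. (-1::int) ^ nat (lev G \<kappa>))"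
    by simp
  also have "\<dots> = (-1) ^ n" unfolding sumA[OF sp] n_def by simp
  also have "(\<Sum>\<kappa>\<in>{\<kappa> \<in> CC G arr. P2 \<kappa>}. h \<kappa>) = (\<Sum>A\<in>Pow Sk - {{}}. x ^ card A)"
    unfolding P2_def h_def n_def Sk_def by (rule sumB[OF sp])
  also have "(-1) ^ n * (-1) ^ n + (\<Sum>A\<in>Pow Sk - {{}}. x ^ card A) = (\<Sum>A\<in>Pow Sk. x ^ card A)"
  proof -
    have "(\<Sum>A\<in>Pow Sk. x ^ card A) = x ^ card ({}::nat set) + (\<Sum>A\<in>Pow Sk - {{}}. x ^ card A)"
      using finSk by (intro sum.remove) auto
    then show ?thesis by (simp add: neg1_sq)
  qed
  also have "\<dots> = (x + 1) ^ card Sk" by (rule sum_pow_card[OF finSk])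
  also have "\<dots> = [:0, 1:] ^ sinks G arr" unfolding x_def Sk_def sinks_def by simp
  finally show ?thesis .
qed

lemma smult_sum_right: "smult c (\<Sum>i\<in>S. f i) = (\<Sum>i\<in>S. smult c (f i))"
  by (induct S rule: infinite_finite_induct) (auto simp: smult_add_right)

lemma Yspan_fin:
  assumes "f \<in> Yspan"
  shows "finite {m. compS (set_mset m) \<and> f m \<noteq> 0}"
proof -
  obtain S c where f: "f = (\<lambda>m. \<Sum>p\<in>S. c p * Ycoef (fst p) (snd p) m)" and S: "finite S"
    and sp: "\<forall>p\<in>S. signed_poset (fst p) (snd p)"
    using assms unfolding Yspan_def by blast
  have "{m. compS (set_mset m) \<and> f m \<noteq> 0} \<subseteq> (\<Union>p\<in>S. Ms (fst p) ` CC (fst p) (snd p))"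
  proof
    fix m assume m: "m \<in> {m. compS (set_mset m) \<and> f m \<noteq> 0}"
    then have "(\<Sum>p\<in>S. c p * Ycoef (fst p) (snd p) m) \<noteq> 0" unfolding f by simp
    then obtain p where p0: "p \<in> S" "c p * Ycoef (fst p) (snd p) m \<noteq> 0"
      by (metis (mono_tags, lifting) sum.neutral)
    then have p: "p \<in> S" "Ycoef (fst p) (snd p) m \<noteq> 0" by auto
    then have "m \<in> {m. compS (set_mset m) \<and> Ycoef (fst p) (snd p) m \<noteq> 0}" using m by auto
    then show "m \<in> (\<Union>p\<in>S. Ms (fst p) ` CC (fst p) (snd p))" using Ysupp sp p(1) by blast
  qed
  moreover have "finite (\<Union>p\<in>S. Ms (fst p) ` CC (fst p) (snd p))"
    using S sp by (auto intro!: finite_CC simp: signed_poset_def signed_graph_def)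
  ultimately show ?thesis by (rule finite_subset)
qed

lemma Phi_mono:
  assumes "finite D" "{m. compS (set_mset m) \<and> f m \<noteq> 0} \<subseteq> D" "\<forall>m\<in>D. compS (set_mset m)"
  shows "Phi f = (\<Sum>m\<in>D. smult (f m) (psi m))"
  unfolding Phi_def by (rule sum.mono_neutral_left[OF assms(1,2)]) (use assms(3) in auto)

theorem mainTheorem7:
  shows "\<exists>\<phi> :: (int multiset \<Rightarrow> rat) \<Rightarrow> rat poly.
     (\<forall>f\<in>Yspan. \<forall>g\<in>Yspan. \<phi> (\<lambda>m. f m + g m) = \<phi> f + \<phi> g) \<and>
     (\<forall>c. \<forall>f\<in>Yspan. \<phi> (\<lambda>m. c * f m) = smult c (\<phi> f)) \<and>
     (\<forall>G arr. signed_poset G arr \<longrightarrow> \<phi> (Ycoef G arr) = [:0, 1:] ^ sinks G arr)"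
proof (intro exI[of _ Phi] conjI ballI allI impI)
  fix f g assume f: "f \<in> Yspan" and g: "g \<in> Yspan"
  let ?D = "{m. compS (set_mset m) \<and> f m \<noteq> 0} \<union> {m. compS (set_mset m) \<and> g m \<noteq> 0}"
  have finD: "finite ?D" using Yspan_fin[OF f] Yspan_fin[OF g] by simp
  have "Phi (\<lambda>m. f m + g m) = (\<Sum>m\<in>?D. smult (f m + g m) (psi m))"
    by (rule Phi_mono[OF finD]) auto
  also have "\<dots> = (\<Sum>m\<in>?D. smult (f m) (psi m)) + (\<Sum>m\<in>?D. smult (g m) (psi m))"
    by (simp add: smult_add_left sum.distrib)
  also have "(\<Sum>m\<in>?D. smult (f m) (psi m)) = Phi f"
    by (rule Phi_mono[OF finD, symmetric]) auto
  also have "(\<Sum>m\<in>?D. smult (g m) (psi m)) = Phi g"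
    by (rule Phi_mono[OF finD, symmetric]) auto
  finally show "Phi (\<lambda>m. f m + g m) = Phi f + Phi g" .
next
  fix c :: rat and f assume f: "f \<in> Yspan"
  let ?D = "{m. compS (set_mset m) \<and> f m \<noteq> 0}"
  have finD: "finite ?D" by (rule Yspan_fin[OF f])
  have "Phi (\<lambda>m. c * f m) = (\<Sum>m\<in>?D. smult (c * f m) (psi m))"
    by (rule Phi_mono[OF finD]) auto
  also have "\<dots> = smult c (\<Sum>m\<in>?D. smult (f m) (psi m))"
    by (simp add: smult_sum_right)
  also have "(\<Sum>m\<in>?D. smult (f m) (psi m)) = Phi f" unfolding Phi_def ..
  finally show "Phi (\<lambda>m. c * f m) = smult c (Phi f)" .
next
  fix G arr assume "signed_poset G arr"
  then show "Phi (Ycoef G arr) = [:0, 1:] ^ sinks G arr" by (rule Phi_Y_val)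
qed

end
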